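(* Let $G$ be a connected (claw, bull)-free graph and let $C$ be an induced cycle of $G$ of length $k\ge 6$. Then $G$ is an expansion of $C$.
   Context: A claw is a graph isomorphic to $K_{1,3}$; a bull is the graph obtained from a triangle by adding two pendant edges at two different vertices. A graph is (claw, bull)-free if it has no induced claw and no induced bull. An expansion of a graph $F$ with vertex set $\{v_1,\dots,v_n\}$ is any graph obtained from $F$ by replacing each vertex $v_i$ by a nonempty clique $K^{[i]}$, the cliques being pairwise vertex-disjoint, and adding all edges between $V(K^{[i]})$ and $V(K^{[j]})$ whenever $v_iv_j\in E(F)$ (and no other edges between different cliques). *)

theory Defs
  imports Main
begin

definition graph :: "'a set \<Rightarrow> ('a \<Rightarrow> 'a \<Rightarrow> bool) \<Rightarrow> bool" where
  "graph V E \<longleftrightarrow> finite V \<and> (\<forall>x y. E x y \<longrightarrow> x \<in> V \<and> y \<in> V) \<and>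
     (\<forall>x y. E x y \<longrightarrow> E y x) \<and> (\<forall>x. \<not> E x x)"

definition connected_graph :: "'a set \<Rightarrow> ('a \<Rightarrow> 'a \<Rightarrow> bool) \<Rightarrow> bool" where
  "connected_graph V E \<longleftrightarrow> V \<noteq> {} \<and>
     (\<forall>u\<in>V. \<forall>v\<in>V. (\<lambda>x y. E x y \<and> x \<in> V \<and> y \<in> V)\<^sup>*\<^sup>* u v)"

definition has_induced_claw :: "'a set \<Rightarrow> ('a \<Rightarrow> 'a \<Rightarrow> bool) \<Rightarrow> bool" where
  "has_induced_claw V E \<longleftrightarrow> (\<exists>a\<in>V. \<exists>b\<in>V. \<exists>c\<in>V. \<exists>d\<in>V.
     distinct [a, b, c, d] \<and> E a b \<and> E a c \<and> E a d \<and>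
     \<not> E b c \<and> \<not> E b d \<and> \<not> E c d)"

definition has_induced_bull :: "'a set \<Rightarrow> ('a \<Rightarrow> 'a \<Rightarrow> bool) \<Rightarrow> bool" where
  "has_induced_bull V E \<longleftrightarrow> (\<exists>a\<in>V. \<exists>b\<in>V. \<exists>c\<in>V. \<exists>d\<in>V. \<exists>e\<in>V.
     distinct [a, b, c, d, e] \<and> E a b \<and> E b c \<and> E a c \<and> E a d \<and> E b e \<and>
     \<not> E d b \<and> \<not> E d c \<and> \<not> E d e \<and> \<not> E e a \<and> \<not> E e c)"

definition claw_bull_free :: "'a set \<Rightarrow> ('a \<Rightarrow> 'a \<Rightarrow> bool) \<Rightarrow> bool" where
  "claw_bull_free V E \<longleftrightarrow> \<not> has_induced_claw V E \<and> \<not> has_induced_bull V E"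

definition induced_cycle :: "'a set \<Rightarrow> ('a \<Rightarrow> 'a \<Rightarrow> bool) \<Rightarrow> 'a list \<Rightarrow> bool" where
  "induced_cycle V E cs \<longleftrightarrow> length cs \<ge> 3 \<and> distinct cs \<and> set cs \<subseteq> V \<and>
     (\<forall>i<length cs. \<forall>j<length cs.
        E (cs ! i) (cs ! j) \<longleftrightarrow> (j = Suc i mod length cs \<or> i = Suc j mod length cs))"

text \<open>(V,E) is an expansion of (VF,EF): there is a surjection f from V onto VF whose
  fibres are the (nonempty) cliques K^{[v]}, with distinct vertices u, w adjacent iff
  they lie in the same clique or in cliques of adjacent vertices of F.\<close>
definition is_expansion ::
  "'a set \<Rightarrow> ('a \<Rightarrow> 'a \<Rightarrow> bool) \<Rightarrow> 'b set \<Rightarrow> ('b \<Rightarrow> 'b \<Rightarrow> bool) \<Rightarrow> bool" where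
  "is_expansion V E VF EF \<longleftrightarrow> (\<exists>f. f ` V = VF \<and>
     (\<forall>u\<in>V. \<forall>w\<in>V. u \<noteq> w \<longrightarrow> (E u w \<longleftrightarrow> f u = f w \<or> EF (f u) (f w))))"

end

theory Submission
  imports Defs
begin

definition nx :: "nat \<Rightarrow> nat \<Rightarrow> nat" where "nx k i = (if Suc i = k then 0 else Suc i)"
definition pv :: "nat \<Rightarrow> nat \<Rightarrow> nat" where "pv k i = (if i = 0 then k - 1 else i - 1)"

lemma nx_lt[simp]: "i < k \<Longrightarrow> nx k i < k" by (simp add: nx_def)
lemma pv_lt[simp]: "i < k \<Longrightarrow> pv k i < k" by (auto simp: pv_def)

locale cyc =
  fixes V :: "'a set" and E :: "'a \<Rightarrow> 'a \<Rightarrow> bool" and cs :: "'a list"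
  assumes G: "graph V E" and F: "claw_bull_free V E" and C: "induced_cycle V E cs"
    and L: "6 \<le> length cs"
begin

lemma symE: "E x y \<Longrightarrow> E y x" using G unfolding graph_def by blast
lemma irr[simp]: "\<not> E x x" using G unfolding graph_def by blast
lemma EV1: "E x y \<Longrightarrow> x \<in> V" using G unfolding graph_def by blast
lemma EV2: "E x y \<Longrightarrow> y \<in> V" using G unfolding graph_def by blast
lemma csV: "i < length cs \<Longrightarrow> cs!i \<in> V" using C unfolding induced_cycle_def by auto
lemma inj[simp]: "i < length cs \<Longrightarrow> j < length cs \<Longrightarrow> (cs!i = cs!j) = (i = j)"
  using C nth_eq_iff_index_eq unfolding induced_cycle_def by blast
lemma adj[simp]: "i < length cs \<Longrightarrow> j < length cs \<Longrightarrow> E (cs!i) (cs!j) = (j = nx (length cs) i \<or> i = nx (length cs) j)"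
proof -
  assume i: "i < length cs" and j: "j < length cs"
  have "Suc i mod length cs = nx (length cs) i" "Suc j mod length cs = nx (length cs) j"
    using i j by (auto simp: nx_def)
  then show ?thesis using C i j unfolding induced_cycle_def by metis
qed
lemma notin1[simp]: "v \<notin> set cs \<Longrightarrow> i < length cs \<Longrightarrow> cs!i \<noteq> v"
  using nth_mem by blast
lemma notin2[simp]: "v \<notin> set cs \<Longrightarrow> i < length cs \<Longrightarrow> v \<noteq> cs!i"
  using nth_mem by blast

lemma kpos[simp]: "Suc (length cs - Suc 0) = length cs" "length cs \<noteq> 0" using L by auto

lemma symE_eq: "E x y = E y x" using symE by blast

lemma noclaw: "distinct [a,b,c,d] \<Longrightarrow> E a b \<Longrightarrow> E a c \<Longrightarrow> E a d \<Longrightarrow>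
   \<not> E b c \<Longrightarrow> \<not> E b d \<Longrightarrow> \<not> E c d \<Longrightarrow> False"
  using F EV1 EV2 unfolding claw_bull_free_def has_induced_claw_def by blast

lemma nobull: "distinct [a, b, c, d, e] \<Longrightarrow> E a b \<Longrightarrow> E b c \<Longrightarrow> E a c \<Longrightarrow> E a d \<Longrightarrow> E b e \<Longrightarrow>
     \<not> E d b \<Longrightarrow> \<not> E d c \<Longrightarrow> \<not> E d e \<Longrightarrow> \<not> E e a \<Longrightarrow> \<not> E e c \<Longrightarrow> False"
  using F EV1 EV2 unfolding claw_bull_free_def has_induced_bull_def by blast

definition clone where "clone v a \<longleftrightarrow> a < length cs \<and> v \<in> V \<and> v \<notin> set cs \<and>
   (\<forall>j<length cs. E v (cs!j) = (j = pv (length cs) a \<or> j = a \<or> j = nx (length cs) a))"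

lemma clone_exists:
  assumes v: "v \<in> V" "v \<notin> set cs" and i0: "i0 < length cs" "E v (cs!i0)"
  shows "\<exists>a. clone v a"
proof -
  let ?k = "length cs"
  have k: "6 \<le> ?k" by (rule L)
  have notall: "\<exists>m<?k. \<not> E v (cs!m)"
  proof (rule ccontr)
    assume "\<not> ?thesis"
    then have all: "\<And>m. m < ?k \<Longrightarrow> E v (cs!m)" by blast
    have "0 < ?k" "2 < ?k" "4 < ?k" using k by auto
    note all = all[OF this(1)] all[OF this(2)] all[OF this(3)] this
    show False
      apply (rule noclaw[of v "cs!0" "cs!2" "cs!4"])
      using k v all by (simp_all add: nx_def)
  qed
  obtain a where a: "a < ?k" "E v (cs!a)" "\<not> E v (cs!(pv ?k a))"
  proof (cases "E v (cs!0)")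
    case True
    define N where "N = {j. j < ?k \<and> \<not> E v (cs!j)}"
    have fin: "finite N" unfolding N_def by (rule finite_subset[of _ "{..<?k}"]) auto
    have ne: "N \<noteq> {}" using notall unfolding N_def by auto
    define M where "M = Max N"
    have M: "M \<in> N" using fin ne unfolding M_def by simp
    have Mge: "\<And>j. j \<in> N \<Longrightarrow> j \<le> M" using fin unfolding M_def by simp
    show ?thesis
    proof (cases "Suc M = ?k")
      case True
      then have "pv ?k 0 = M" by (simp add: pv_def)
      then show ?thesis using that[of 0] k M \<open>E v (cs!0)\<close> unfolding N_def
        by (intro that[of 0]) auto
    next
      case False
      have "Suc M < ?k" using M False unfolding N_def by auto
      moreover have "E v (cs!(Suc M))" using Mge[of "Suc M"] \<open>Suc M < ?k\<close> unfolding N_def by force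
      ultimately show ?thesis using that[of "Suc M"] M unfolding N_def pv_def by auto
    qed
  next
    case False
    define a where "a = (LEAST j. j < ?k \<and> E v (cs!j))"
    have a1: "a < ?k \<and> E v (cs!a)" unfolding a_def by (rule LeastI[of _ i0]) (use i0 in auto)
    have a0: "a \<noteq> 0" using a1 False by (cases a) auto
    have "\<not> (a - 1 < ?k \<and> E v (cs!(a-1)))"
      unfolding a_def by (rule not_less_Least) (use a0 a_def in auto)
    then show ?thesis using that[of a] a1 a0 unfolding pv_def by auto
  qed
  define b where "b = nx ?k a"
  define c where "c = nx ?k b"
  define d where "d = nx ?k c"
  define p where "p = pv ?k a"
  have lt: "b < ?k" "c < ?k" "d < ?k" "p < ?k" using a unfolding b_def c_def d_def p_def by auto
  have Eb: "E v (cs!b)"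
  proof (rule ccontr)
    assume nb: "\<not> E v (cs!b)"
    show False
      apply (rule noclaw[of "cs!a" "cs!p" "cs!b" v])
      using a k v lt nb unfolding b_def p_def
      by (simp_all add: symE_eq[of _ v]) (auto simp: nx_def pv_def)
  qed
  have Ec: "E v (cs!c)"
  proof (rule ccontr)
    assume nc: "\<not> E v (cs!c)"
    show False
      apply (rule nobull[of "cs!a" "cs!b" v "cs!p" "cs!c"])
      using a k v lt nc Eb unfolding c_def b_def p_def
      by (simp_all add: symE_eq[of _ v]) (auto simp: nx_def pv_def)
  qed
  have nEd: "\<not> E v (cs!d)"
  proof
    assume Ed: "E v (cs!d)"
    show False
      apply (rule nobull[of "cs!a" v "cs!b" "cs!p" "cs!d"])
      using a k v lt Ed Eb unfolding d_def c_def b_def p_def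
      by (simp_all add: symE_eq[of _ v]) (auto simp: nx_def pv_def)
  qed
  have "clone v b"
    unfolding clone_def
  proof (intro conjI allI impI)
    show "b < ?k" "v \<in> V" "v \<notin> set cs" using lt v by auto
    fix j assume j: "j < ?k"
    have pb: "pv ?k b = a" "nx ?k b = c" using a unfolding b_def c_def by (auto simp: nx_def pv_def)
    show "E v (cs ! j) = (j = pv ?k b \<or> j = b \<or> j = nx ?k b)"
    proof
      assume Ej: "E v (cs ! j)"
      show "j = pv ?k b \<or> j = b \<or> j = nx ?k b"
      proof (rule ccontr)
        assume nj: "\<not> ?thesis"
        have ne1: "j \<noteq> p" "j \<noteq> d" using Ej a(3) nEd unfolding p_def by auto
        have ne2: "j \<noteq> a" "j \<noteq> b" "j \<noteq> c" using nj pb by auto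
        show False
          using ne1 ne2
          apply -
          apply (rule noclaw[of v "cs!a" "cs!c" "cs!j"])
          using a k v lt Ej Ec j unfolding d_def c_def b_def p_def
          by (simp_all add: symE_eq[of _ v]) (auto simp: nx_def pv_def split: if_splits)
      qed
    next
      assume "j = pv ?k b \<or> j = b \<or> j = nx ?k b"
      then show "E v (cs ! j)" using pb a Eb Ec by auto
    qed
  qed
  then show ?thesis by blast
qed


lemma cloneE1: "clone u a \<Longrightarrow> j < length cs \<Longrightarrow> E u (cs!j) = (j = pv (length cs) a \<or> j = a \<or> j = nx (length cs) a)"
  unfolding clone_def by blast
lemma cloneE2: "clone u a \<Longrightarrow> j < length cs \<Longrightarrow> E (cs!j) u = (j = pv (length cs) a \<or> j = a \<or> j = nx (length cs) a)"
  using cloneE1 symE_eq by blast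
lemma cloneD: "clone u a \<Longrightarrow> a < length cs \<and> u \<in> V \<and> u \<notin> set cs"
  unfolding clone_def by blast

lemma cl_same:
  assumes cu: "clone u a" and cw: "clone w a" and uw: "u \<noteq> w"
  shows "E u w"
proof (rule ccontr)
  assume n: "\<not> E u w"
  let ?k = "length cs"
  have k: "6 \<le> ?k" by (rule L)
  have ab: "a < ?k" "u \<notin> set cs" "w \<notin> set cs" using cu cw cloneD by auto
  note E1 = cloneE1[OF cu] cloneE1[OF cw] cloneE2[OF cu] cloneE2[OF cw]
  show False
    apply (rule noclaw[of "cs!(pv ?k a)" "cs!(pv ?k (pv ?k a))" u w])
    using ab k uw n symE_eq[of u w] by (simp_all add: E1) (auto simp: nx_def pv_def split: if_splits)
qed

lemma cl_next:
  assumes cu: "clone u a" and cw: "clone w (nx (length cs) a)" and uw: "u \<noteq> w"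
  shows "E u w"
proof (rule ccontr)
  assume n: "\<not> E u w"
  let ?k = "length cs"
  have k: "6 \<le> ?k" by (rule L)
  have ab: "a < ?k" "u \<notin> set cs" "w \<notin> set cs" using cu cw cloneD by auto
  note E1 = cloneE1[OF cu] cloneE1[OF cw] cloneE2[OF cu] cloneE2[OF cw]
  let ?b = "nx ?k a"
  show False
    apply (rule nobull[of "cs!?b" "cs!(nx ?k ?b)" w u "cs!(nx ?k (nx ?k ?b))"])
    using ab k uw n symE_eq[of u w] by (simp_all add: E1) (auto simp: nx_def pv_def split: if_splits)
qed

lemma cl_next2:
  assumes cu: "clone u a" and cw: "clone w (nx (length cs) (nx (length cs) a))" and uw: "u \<noteq> w"
  shows "\<not> E u w"
proof
  assume n: "E u w"
  let ?k = "length cs"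
  have k: "6 \<le> ?k" by (rule L)
  have ab: "a < ?k" "u \<notin> set cs" "w \<notin> set cs" using cu cw cloneD by auto
  note E1 = cloneE1[OF cu] cloneE1[OF cw] cloneE2[OF cu] cloneE2[OF cw]
  let ?b = "nx ?k (nx ?k a)"
  show False
    apply (rule nobull[of w "cs!(nx ?k ?b)" "cs!?b" u "cs!(nx ?k (nx ?k ?b))"])
    using ab k uw n symE_eq[of u w] by (simp_all add: E1) (auto simp: nx_def pv_def split: if_splits)
qed

lemma cl_far:
  assumes cu: "clone u a" and cw: "clone w b" and uw: "u \<noteq> w"
    and nb: "b \<noteq> a" "b \<noteq> nx (length cs) a" "a \<noteq> nx (length cs) b"
      "b \<noteq> nx (length cs) (nx (length cs) a)" "a \<noteq> nx (length cs) (nx (length cs) b)"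
  shows "\<not> E u w"
proof
  assume n: "E u w"
  let ?k = "length cs"
  have k: "6 \<le> ?k" by (rule L)
  have ab: "a < ?k" "b < ?k" "u \<notin> set cs" "w \<notin> set cs" using cu cw cloneD by auto
  note E1 = cloneE1[OF cu] cloneE1[OF cw] cloneE2[OF cu] cloneE2[OF cw]
  show False
    apply (rule noclaw[of u w "cs!(pv ?k a)" "cs!(nx ?k a)"])
    using ab k uw n nb symE_eq[of u w] apply (simp_all add: E1)
    using L by (auto simp: nx_def pv_def split: if_splits)
qed

lemma clones_adj:
  assumes cu: "clone u a" and cw: "clone w b" and uw: "u \<noteq> w"
  shows "E u w = (a = b \<or> b = nx (length cs) a \<or> a = nx (length cs) b)"
proof
  assume e: "E u w"
  show "a = b \<or> b = nx (length cs) a \<or> a = nx (length cs) b"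
  proof (rule ccontr)
    assume h: "\<not> ?thesis"
    have "b \<noteq> nx (length cs) (nx (length cs) a)" using cl_next2[of u a w] cu cw uw e by blast
    moreover have "a \<noteq> nx (length cs) (nx (length cs) b)" using cl_next2[of w b u] cu cw uw e symE by blast
    ultimately show False using cl_far[OF cu cw uw] h e by blast
  qed
next
  assume "a = b \<or> b = nx (length cs) a \<or> a = nx (length cs) b"
  then show "E u w" using cl_same[of u a w] cl_next[of u a w] cl_next[of w b u] cu cw uw symE by blast
qed

lemma pv_nx: "i < length cs \<Longrightarrow> j < length cs \<Longrightarrow> (j = pv (length cs) i) = (i = nx (length cs) j)"
  by (auto simp: nx_def pv_def)

lemma cyc_update:
  assumes cv: "clone v a"
  shows "cyc V E (cs[a := v])"
proof -
  let ?k = "length cs"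
  let ?d = "cs[a := v]"
  have a: "a < ?k" "v \<in> V" "v \<notin> set cs" using cloneD[OF cv] by auto
  have ic: "induced_cycle V E ?d"
    unfolding induced_cycle_def
  proof (intro conjI allI impI)
    show "3 \<le> length ?d" using L by simp
    show "distinct ?d" using C a unfolding induced_cycle_def by (auto intro: distinct_list_update)
    show "set ?d \<subseteq> V" using C a set_update_subset_insert[of cs a v] unfolding induced_cycle_def by auto
    fix i j assume i: "i < length ?d" and j: "j < length ?d"
    have s: "Suc i mod ?k = nx ?k i" "Suc j mod ?k = nx ?k j" using i j by (auto simp: nx_def)
    have "E (?d ! i) (?d ! j) = (j = nx ?k i \<or> i = nx ?k j)"
    proof (cases "i = a")
      case True
      show ?thesis
      proof (cases "j = a")
        case True
        then show ?thesis using \<open>i = a\<close> a L by (auto simp: nx_def)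
      next
        case False
        then show ?thesis using \<open>i = a\<close> a i j cloneE1[OF cv, of j] pv_nx[of a j] by auto
      qed
    next
      case False
      show ?thesis
      proof (cases "j = a")
        case True
        then show ?thesis using \<open>i \<noteq> a\<close> a i j cloneE2[OF cv, of i] pv_nx[of a i] by auto
      next
        case False
        then show ?thesis using \<open>i \<noteq> a\<close> a i j by auto
      qed
    qed
    then show "E (?d ! i) (?d ! j) = (j = Suc i mod length ?d \<or> i = Suc j mod length ?d)"
      using s by simp
  qed
  show ?thesis using G F ic L by unfold_locales auto
qed

end
context cyc
begin

lemma near:
  assumes conn: "connected_graph V E" and v: "v \<in> V"
  shows "v \<in> set cs \<or> (\<exists>i<length cs. E v (cs!i))"
proof -
  let ?R = "\<lambda>x y. E x y \<and> x \<in> V \<and> y \<in> V"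
  have "0 < length cs" using L by linarith
  then have c0: "cs!0 \<in> V" by (rule csV)
  have "\<forall>u\<in>V. \<forall>v\<in>V. ?R\<^sup>*\<^sup>* u v" using conn unfolding connected_graph_def by (rule conjunct2)
  then have "?R\<^sup>*\<^sup>* (cs!0) v" using c0 v by blast
  then show ?thesis
  proof (induction rule: rtranclp_induct)
    case base
    then show ?case using \<open>0 < length cs\<close> nth_mem by blast
  next
    case (step y z)
    have yz: "E y z" using step.hyps(2) by blast
    show ?case
    proof (cases "z \<in> set cs \<or> (\<exists>i<length cs. E z (cs!i))")
      case True then show ?thesis by blast
    next
      case False
      then have zn: "z \<notin> set cs" and zE: "\<And>i. i < length cs \<Longrightarrow> \<not> E z (cs!i)" by auto
      have yn: "y \<notin> set cs"
      proof
        assume "y \<in> set cs"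
        then obtain i where i: "i < length cs" "y = cs!i" using in_set_conv_nth[of y cs] by blast
        then show False using zE[OF i(1)] symE[OF yz] by simp
      qed
      then obtain i where i: "i < length cs" "E y (cs!i)" using step.IH by blast
      obtain a where ca: "clone y a" using clone_exists[OF EV1[OF yz] yn i] by blast
      have ad: "a < length cs" using cloneD[OF ca] by auto
      have dc: "cyc V E (cs[a := y])" by (rule cyc_update[OF ca])
      have zd: "z \<notin> set (cs[a := y])" using zn set_update_subset_insert[of cs a y] yz by auto
      have "E z (cs[a := y] ! a)" using ad symE[OF yz] by simp
      then obtain b where cb: "cyc.clone V E (cs[a := y]) z b"
        using cyc.clone_exists[OF dc EV2[OF yz] zd, of a] ad by auto
      have bl: "b < length cs" using cyc.cloneD[OF dc cb] by simp
      obtain j where j: "j < length cs" "j \<noteq> a" "E z (cs[a := y] ! j)"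
      proof (cases "b = a")
        case True
        show ?thesis
          apply (rule that[of "nx (length cs) b"])
          using cyc.cloneE1[OF dc cb, of "nx (length cs) b"] bl True L kpos by (auto simp: nx_def)
      next
        case False
        show ?thesis
          apply (rule that[of b])
          using cyc.cloneE1[OF dc cb, of b] bl False by auto
      qed
      then show ?thesis using zE by auto
    qed
  qed
qed

end

theorem lemma4:
  fixes V :: "'a set" and E :: "'a \<Rightarrow> 'a \<Rightarrow> bool" and cs :: "'a list"
  assumes "graph V E"
    and "connected_graph V E"
    and "claw_bull_free V E"
    and "induced_cycle V E cs"
    and "length cs \<ge> 6"
  shows "is_expansion V E (set cs) (\<lambda>x y. E x y \<and> x \<in> set cs \<and> y \<in> set cs)"
proof -
  interpret cyc V E cs using assms by unfold_locales auto
  let ?k = "length cs"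
  have ex: "\<exists>g. g < ?k \<and> (v \<in> set cs \<longrightarrow> cs!g = v) \<and> (v \<notin> set cs \<longrightarrow> clone v g)"
    if v: "v \<in> V" for v
  proof (cases "v \<in> set cs")
    case True
    then obtain i where "i < ?k" "cs!i = v" using in_set_conv_nth[of v cs] by blast
    then show ?thesis using True by blast
  next
    case False
    then obtain i where i: "i < ?k" "E v (cs!i)" using near[OF assms(2) v] by blast
    obtain a where "clone v a" using clone_exists[OF v False i] by blast
    then show ?thesis using False cloneD by blast
  qed
  then obtain g where g: "\<And>v. v \<in> V \<Longrightarrow> g v < ?k \<and> (v \<in> set cs \<longrightarrow> cs!(g v) = v) \<and> (v \<notin> set cs \<longrightarrow> clone v (g v))"
    by metis
  show ?thesis
    unfolding is_expansion_def
  proof (intro exI conjI ballI impI)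
    show "(\<lambda>v. cs ! g v) ` V = set cs"
    proof
      show "(\<lambda>v. cs ! g v) ` V \<subseteq> set cs" using g by auto
      show "set cs \<subseteq> (\<lambda>v. cs ! g v) ` V"
      proof
        fix x assume x: "x \<in> set cs"
        then have xV: "x \<in> V" using assms(4) unfolding induced_cycle_def by blast
        then have "cs ! g x = x" using g x by blast
        then show "x \<in> (\<lambda>v. cs ! g v) ` V" using xV by force
      qed
    qed
    fix u w assume u: "u \<in> V" and w: "w \<in> V" and uw: "u \<noteq> w"
    have gu: "g u < ?k" and gw: "g w < ?k" using g u w by auto
    have rhs: "(cs ! g u = cs ! g w \<or> E (cs ! g u) (cs ! g w) \<and> cs ! g u \<in> set cs \<and> cs ! g w \<in> set cs)
       = (g u = g w \<or> g w = nx ?k (g u) \<or> g u = nx ?k (g w))" by (simp only: inj[OF gu gw] adj[OF gu gw] nth_mem[OF gu] nth_mem[OF gw] simp_thms)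
    have "E u w = (g u = g w \<or> g w = nx ?k (g u) \<or> g u = nx ?k (g w))"
    proof (cases "u \<in> set cs")
      case True
      then have uu: "cs ! g u = u" using g u by blast
      show ?thesis
      proof (cases "w \<in> set cs")
        case True
        then have "cs ! g w = w" using g w by blast
        moreover have "g u \<noteq> g w" using uu \<open>cs ! g w = w\<close> uw by metis
        ultimately show ?thesis using uu adj[OF gu gw] by simp
      next
        case False
        then have cw: "clone w (g w)" using g w by blast
        show ?thesis using cloneE2[OF cw gu] pv_nx[OF gw gu] uu uw by auto
      qed
    next
      case False
      then have cu: "clone u (g u)" using g u by blast
      show ?thesis
      proof (cases "w \<in> set cs")
        case True
        then have ww: "cs ! g w = w" using g w by blast
        show ?thesis using cloneE1[OF cu gw] pv_nx[OF gu gw] ww uw by auto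
      next
        case False
        then have cw: "clone w (g w)" using g w by blast
        show ?thesis using clones_adj[OF cu cw uw] .
      qed
    qed
    then show "E u w = (cs ! g u = cs ! g w \<or> E (cs ! g u) (cs ! g w) \<and> cs ! g u \<in> set cs \<and> cs ! g w \<in> set cs)"
      using rhs by simp
  qed
qed

end
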